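(* Let $(X,\le)$ be a well-ordered set, $k>0$, let $<_1,<_2$ be upward strict orders on $X^k$, and let $U$ be a $<_1,<_2$-$\#$-decreasing function assignment for $X^k$. Then there exists a unique function $f:X^k\to X^k$ such that for every finite $A\subseteq X^k$ there is a finite $B$ with $A\subseteq B\subseteq X^k$ and $U(B)\subseteq f$ (as graphs).
   Context: A function assignment for $X^k$ assigns to each finite $A\subseteq X^k$ a function $U(A):A\to A$, identified with its graph. A strict order is a transitive irreflexive relation. For $x,y\in X^k$, $x\le_c y$ iff $x_i\le y_i$ for all $i$ (using the order $\le$ of $X$); a strict order $<$ on $X^k$ is upward iff $x\le_c y$ implies not $y<x$. $U$ is $<_1,<_2$-$\#$-decreasing iff for all finite $A\subseteq X^k$ and $x\in X^k$, either $U(A)\subseteq U(A\cup\{x\})$ or there exists $y$ with $x<_1y$ and $U(A\cup\{x\})(y)<_2U(A)(y)$. *)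

theory Defs
  imports Main
begin

text \<open>Points of X^k are modelled as functions from a finite index type 'k
 (with CARD('k) = k > 0, automatic since types are nonempty) into X = 'a.\<close>

definition graph_on :: "'b set \<Rightarrow> ('b \<Rightarrow> 'b) \<Rightarrow> ('b \<times> 'b) set" where
  "graph_on A g = {(x, g x) | x. x \<in> A}"

definition fgraph :: "('b \<Rightarrow> 'b) \<Rightarrow> ('b \<times> 'b) set" where
  "fgraph g = {(x, g x) | x. True}"

definition function_assignment :: "('b set \<Rightarrow> 'b \<Rightarrow> 'b) \<Rightarrow> bool" where
  "function_assignment U \<longleftrightarrow> (\<forall>A. finite A \<longrightarrow> (\<forall>x\<in>A. U A x \<in> A))"

definition strict_order :: "('b \<Rightarrow> 'b \<Rightarrow> bool) \<Rightarrow> bool" where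
  "strict_order r \<longleftrightarrow> (\<forall>x y z. r x y \<longrightarrow> r y z \<longrightarrow> r x z) \<and> (\<forall>x. \<not> r x x)"

definition le_c :: "('k \<Rightarrow> 'a::order) \<Rightarrow> ('k \<Rightarrow> 'a) \<Rightarrow> bool" where
  "le_c x y \<longleftrightarrow> (\<forall>i. x i \<le> y i)"

definition upward :: "(('k \<Rightarrow> 'a::order) \<Rightarrow> ('k \<Rightarrow> 'a) \<Rightarrow> bool) \<Rightarrow> bool" where
  "upward r \<longleftrightarrow> (\<forall>x y. le_c x y \<longrightarrow> \<not> r y x)"

text \<open>U(A) is a function A -> A; its graph is graph_on A (U A). Values U A y
 outside A are irrelevant.\<close>
definition hash_decreasing ::
  "('b \<Rightarrow> 'b \<Rightarrow> bool) \<Rightarrow> ('b \<Rightarrow> 'b \<Rightarrow> bool) \<Rightarrow> ('b set \<Rightarrow> 'b \<Rightarrow> 'b) \<Rightarrow> bool" where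
  "hash_decreasing r1 r2 U \<longleftrightarrow>
     (\<forall>A x. finite A \<longrightarrow>
        graph_on A (U A) \<subseteq> graph_on (A \<union> {x}) (U (A \<union> {x})) \<or>
        (\<exists>y. y \<in> A \<and> r1 x y \<and> r2 (U (A \<union> {x}) y) (U A y)))"

end

theory Submission
  imports Defs "HOL-Library.Ramsey" "HOL-Library.Multiset"
begin

lemma dickson_aux:
  fixes s :: "nat \<Rightarrow> ('k \<Rightarrow> 'a::wellorder)"
  assumes "finite K"
  shows "\<exists>Y. infinite Y \<and> (\<forall>i\<in>Y. \<forall>j\<in>Y. i < j \<longrightarrow> (\<forall>c\<in>K. s i c \<le> s j c))"
  using assms
proof (induction K rule: finite_induct)
  case empty
  then show ?case by (intro exI[of _ UNIV]) auto
next
  case (insert c K)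
  then obtain Y where Y: "infinite Y" "\<forall>i\<in>Y. \<forall>j\<in>Y. i < j \<longrightarrow> (\<forall>c\<in>K. s i c \<le> s j c)"
    by blast
  define col where "col X = (if s (Min X) c \<le> s (Max X) c then 0 else (1::nat))" for X :: "nat set"
  have "\<forall>x\<in>Y. \<forall>y\<in>Y. x \<noteq> y \<longrightarrow> col {x, y} < 2" by (simp add: col_def)
  from Ramsey2[OF Y(1) this] obtain Y' t where Y': "Y' \<subseteq> Y" "infinite Y'" "t < 2"
    "\<forall>x\<in>Y'. \<forall>y\<in>Y'. x\<noteq>y \<longrightarrow> col {x, y} = t" by blast
  have mm: "Min {i, j} = i" "Max {i,j} = j" if "i < j" for i j :: nat
    using that by auto
  show ?case
  proof (cases "t = 0")
    case True
    have "\<forall>i\<in>Y'. \<forall>j\<in>Y'. i < j \<longrightarrow> s i c \<le> s j c"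
    proof (intro ballI impI)
      fix i j assume "i \<in> Y'" "j \<in> Y'" "i < j"
      then have "col {i,j} = 0" using Y'(4) True by auto
      then show "s i c \<le> s j c" using mm[OF \<open>i<j\<close>] by (simp add: col_def split: if_splits)
    qed
    then show ?thesis using Y Y' by (intro exI[of _ Y']) blast
  next
    case False
    then have t1: "t = 1" using Y'(3) by auto
    have dec: "s j c < s i c" if "i \<in> Y'" "j \<in> Y'" "i < j" for i j
    proof -
      have "col {i,j} = 1" using Y'(4) t1 that by auto
      then show ?thesis using mm[OF \<open>i<j\<close>] by (simp add: col_def split: if_splits)
    qed
    define v where "v = (LEAST v. v \<in> (\<lambda>i. s i c) ` Y')"
    obtain i0 where "i0 \<in> Y'" using Y'(2) by (metis finite.emptyI all_not_in_conv)
    then have "v \<in> (\<lambda>i. s i c) ` Y'" unfolding v_def by (metis LeastI imageI)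
    then obtain i1 where i1: "i1 \<in> Y'" "v = s i1 c" by auto
    obtain j where j: "j > i1" "j \<in> Y'" using Y'(2) by (meson infinite_nat_iff_unbounded)
    have "v \<le> s j c" unfolding v_def using j by (intro Least_le) auto
    moreover have "s j c < v" using dec[OF i1(1) j(2) j(1)] i1 by simp
    ultimately show ?thesis by simp
  qed
qed

lemma dickson:
  fixes s :: "nat \<Rightarrow> ('k::finite \<Rightarrow> 'a::wellorder)"
  shows "\<exists>i j. i < j \<and> le_c (s i) (s j)"
proof -
  obtain Y where Y: "infinite Y" "\<forall>i\<in>Y. \<forall>j\<in>Y. i < j \<longrightarrow> (\<forall>c\<in>UNIV. s i c \<le> s j c)"
    using dickson_aux[of "UNIV :: 'k set" s] by auto
  obtain i where "i \<in> Y" using Y(1) by (metis finite.emptyI all_not_in_conv)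
  obtain j where "j > i" "j \<in> Y" using Y(1) by (meson infinite_nat_iff_unbounded)
  then show ?thesis using Y(2) \<open>i \<in> Y\<close> unfolding le_c_def by blast
qed

lemma upward_wf:
  fixes r :: "('k::finite \<Rightarrow> 'a::wellorder) \<Rightarrow> ('k \<Rightarrow> 'a) \<Rightarrow> bool"
  assumes "strict_order r" "upward r"
  shows "wf {(a,b). r a b}"
proof (rule ccontr)
  assume "\<not> wf {(a,b). r a b}"
  then obtain s where s: "\<And>i. r (s (Suc i)) (s i)" unfolding wf_iff_no_infinite_down_chain by auto
  have tr: "\<And>x y z. r x y \<Longrightarrow> r y z \<Longrightarrow> r x z" using assms(1) unfolding strict_order_def by blast
  have "r (s (Suc (i + d))) (s i)" for i d
  proof (induction d)
    case 0 then show ?case using s by simp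
  next
    case (Suc d) then show ?case using s tr by (metis add_Suc_right)
  qed
  then have ch: "r (s j) (s i)" if "i < j" for i j
    using that by (metis less_imp_Suc_add)
  obtain i j where "i < j" "le_c (s i) (s j)" using dickson[of s] by auto
  then show False using ch assms(2) unfolding upward_def by blast
qed


lemma graph_on_sub: "graph_on A g \<subseteq> graph_on B h \<longleftrightarrow> A \<subseteq> B \<and> (\<forall>p\<in>A. g p = h p)"
  unfolding graph_on_def by blast

lemma graph_fgraph: "graph_on A g \<subseteq> fgraph h \<longleftrightarrow> (\<forall>p\<in>A. g p = h p)"
  unfolding graph_on_def fgraph_def by blast

lemma finite_max:
  assumes "finite S" "S \<noteq> {}" "\<And>x y z. r x y \<Longrightarrow> r y z \<Longrightarrow> r x z" "\<And>x. \<not> r x x"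
  shows "\<exists>m\<in>S. \<forall>s\<in>S. \<not> r m s"
  using assms(1,2)
proof (induction S rule: finite_ne_induct)
  case (singleton x) then show ?case using assms(4) by auto
next
  case (insert x F)
  then obtain m where m: "m \<in> F" "\<forall>s\<in>F. \<not> r m s" by blast
  show ?case
  proof (cases "r m x")
    case True
    then show ?thesis using m assms(3,4) by (metis insert_iff insertI1)
  next
    case False
    then show ?thesis using m by auto
  qed
qed

lemma finite_min:
  assumes "finite S" "S \<noteq> {}" "\<And>x y z. r x y \<Longrightarrow> r y z \<Longrightarrow> r x z" "\<And>x. \<not> r x x"
  shows "\<exists>m\<in>S. \<forall>s\<in>S. \<not> r s m"
  using finite_max[of S "\<lambda>a b. r b a"] assms by blast

locale setting =
  fixes lt1 lt2 :: "('k::finite \<Rightarrow> 'a::wellorder) \<Rightarrow> ('k \<Rightarrow> 'a) \<Rightarrow> bool"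
    and U :: "('k \<Rightarrow> 'a) set \<Rightarrow> ('k \<Rightarrow> 'a) \<Rightarrow> ('k \<Rightarrow> 'a)"
  assumes tr1: "\<And>x y z. lt1 x y \<Longrightarrow> lt1 y z \<Longrightarrow> lt1 x z"
    and irr1: "\<And>x. \<not> lt1 x x"
    and tr2: "\<And>x y z. lt2 x y \<Longrightarrow> lt2 y z \<Longrightarrow> lt2 x z"
    and irr2: "\<And>x. \<not> lt2 x x"
    and wf1: "wf {(a,b). lt1 a b}"
    and wf2: "wf {(a,b). lt2 a b}"
    and hash: "hash_decreasing lt1 lt2 U"
begin

definition dn where "dn y = {p. p = y \<or> lt1 p y}"

lemma loc:
  assumes "finite C" "D \<subseteq> C" "\<forall>c\<in>C-D. \<forall>d\<in>D. \<not> lt1 c d" "p \<in> D"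
  shows "U C p = U D p"
  using assms
proof (induction "card (C - D)" arbitrary: C)
  case 0
  then have "C = D" by auto
  then show ?case by simp
next
  case (Suc n)
  then have ne: "C - D \<noteq> {}" by auto
  obtain x where x: "x \<in> C - D" "\<forall>s\<in>C - D. \<not> lt1 x s"
    using finite_max[OF _ ne, of lt1] Suc.prems(1) tr1 irr1 by blast
  define C' where "C' = C - {x}"
  have C: "C = C' \<union> {x}" using x C'_def by auto
  have x1: "x \<in> C" "x \<notin> D" using x by auto
  have cd: "C' - D = (C - D) - {x}" unfolding C'_def by blast
  have "card (C' - D) = n" unfolding cd using Suc.hyps(2) x1 Suc.prems(1)
    by (simp add: card_Diff_singleton)
  moreover have "D \<subseteq> C'" using Suc.prems(2) x1 unfolding C'_def by blast
  moreover have "\<forall>c\<in>C'-D. \<forall>d\<in>D. \<not> lt1 c d" using Suc.prems(3) unfolding C'_def by blast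
  moreover have "finite C'" using Suc.prems(1) unfolding C'_def by blast
  ultimately have IH: "U C' p = U D p" using Suc.hyps(1)[of C'] Suc.prems(4) by simp
  have fC': "finite C'" using Suc.prems(1) C'_def by auto
  from hash[unfolded hash_decreasing_def, rule_format, OF fC', of x]
  have "graph_on C' (U C') \<subseteq> graph_on (C' \<union> {x}) (U (C' \<union> {x})) \<or>
        (\<exists>y. y \<in> C' \<and> lt1 x y \<and> lt2 (U (C' \<union> {x}) y) (U C' y))" .
  then show ?case
  proof
    assume "graph_on C' (U C') \<subseteq> graph_on (C' \<union> {x}) (U (C' \<union> {x}))"
    moreover have "p \<in> C'" using Suc.prems(2,4) x1 unfolding C'_def by blast
    ultimately have "U C' p = U (C' \<union> {x}) p" by (simp add: graph_on_sub)
    then have "U C p = U C' p" using C by simp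
    then show ?thesis using IH by simp
  next
    assume "\<exists>y. y \<in> C' \<and> lt1 x y \<and> lt2 (U (C' \<union> {x}) y) (U C' y)"
    then obtain y where "y \<in> C'" "lt1 x y" by blast
    then show ?thesis using x Suc.prems(3) unfolding C'_def by auto
  qed
qed

lemma locdn:
  assumes "finite C" "D \<subseteq> C" "\<forall>c\<in>C. \<forall>d\<in>D. lt1 c d \<longrightarrow> c \<in> D" "p \<in> D"
  shows "U C p = U D p"
  using loc[OF assms(1,2) _ assms(4)] assms(3) by blast

lemma locp:
  assumes "finite C" "p \<in> C"
  shows "U C p = U (C \<inter> dn p) p"
  by (rule locdn) (use assms tr1 in \<open>auto simp: dn_def\<close>)


lemma dn_trans: "p \<in> dn q \<Longrightarrow> q \<in> dn r \<Longrightarrow> p \<in> dn r"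
  unfolding dn_def using tr1 by blast

lemma step:
  assumes "finite C'" "x \<notin> C'" "p \<in> C'" "U (insert x C') p \<noteq> U C' p"
  shows "\<exists>w\<in>C'. lt1 x w \<and> w \<in> dn p \<and> lt2 (U (insert x C') w) (U C' w)"
proof -
  define C where "C = insert x C'"
  have fC: "finite C" using assms(1) C_def by simp
  have xp: "lt1 x p"
  proof (rule ccontr)
    assume "\<not> lt1 x p"
    then have "C \<inter> dn p = C' \<inter> dn p" using assms(2,3) unfolding C_def dn_def by auto
    then show False using locp[OF fC, of p] locp[OF assms(1,3)] assms(3,4) unfolding C_def by auto
  qed
  define P where "P = C' \<inter> dn p"
  have fP: "finite P" using assms(1) P_def by simp
  have PC: "P \<union> {x} = C \<inter> dn p" using xp unfolding P_def C_def dn_def by auto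
  have pP: "p \<in> P" using assms(3) unfolding P_def dn_def by simp
  have dc1: "U C w = U (C \<inter> dn p) w" if "w \<in> C \<inter> dn p" for w
    by (rule locdn) (use fC that dn_trans in \<open>auto simp: dn_def\<close>)
  have dc2: "U C' w = U P w" if "w \<in> P" for w
    by (rule locdn) (use assms(1) that dn_trans in \<open>auto simp: dn_def P_def\<close>)
  from hash[unfolded hash_decreasing_def, rule_format, OF fP, of x]
  show ?thesis
  proof
    assume "graph_on P (U P) \<subseteq> graph_on (P \<union> {x}) (U (P \<union> {x}))"
    then have "U P p = U (C \<inter> dn p) p" using pP unfolding graph_on_sub PC by auto
    moreover have pC: "p \<in> C \<inter> dn p" using assms(3) by (simp add: C_def dn_def)
    ultimately have "U C' p = U C p" using dc1[OF pC] dc2[OF pP] by simp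
    then show ?thesis using assms(4) C_def by simp
  next
    assume "\<exists>y. y \<in> P \<and> lt1 x y \<and> lt2 (U (P \<union> {x}) y) (U P y)"
    then obtain w where w: "w \<in> P" "lt1 x w" "lt2 (U (P \<union> {x}) w) (U P w)" by blast
    have "U C w = U (P \<union> {x}) w" using dc1[of w] w(1) PC by auto
    moreover have "U C' w = U P w" using dc2 w(1) by simp
    ultimately show ?thesis using w P_def C_def by auto
  qed
qed

lemma dom:
  assumes "finite C" "E \<subseteq> C"
  shows "\<forall>p\<in>E. U C p \<noteq> U E p \<longrightarrow> (\<exists>q\<in>E. q \<in> dn p \<and> lt2 (U C q) (U E q))"
  using assms
proof (induction "card (C - E)" arbitrary: C)
  case 0
  then have "C = E" by auto
  then show ?case by simp
next
  case (Suc n)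
  then have ne: "C - E \<noteq> {}" by auto
  obtain x where x: "x \<in> C - E" "\<forall>s\<in>C - E. \<not> lt1 x s"
    using finite_max[OF _ ne, of lt1] Suc.prems(1) tr1 irr1 by blast
  define C' where "C' = C - {x}"
  have C: "C = insert x C'" using x C'_def by auto
  have x1: "x \<in> C" "x \<notin> E" "x \<notin> C'" using x C'_def by auto
  have cd: "C' - E = (C - E) - {x}" unfolding C'_def by blast
  have "card (C' - E) = n" unfolding cd using Suc.hyps(2) x1 Suc.prems(1)
    by (simp add: card_Diff_singleton)
  moreover have EC': "E \<subseteq> C'" using Suc.prems(2) x1 unfolding C'_def by blast
  moreover have fC': "finite C'" using Suc.prems(1) unfolding C'_def by blast
  ultimately have IH: "\<forall>p\<in>E. U C' p \<noteq> U E p \<longrightarrow> (\<exists>q\<in>E. q \<in> dn p \<and> lt2 (U C' q) (U E q))"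
    using Suc.hyps(1)[of C'] by simp
  show ?case
  proof (intro ballI impI)
    fix p assume p: "p \<in> E" "U C p \<noteq> U E p"
    define S where "S = {q\<in>E. q \<in> dn p \<and> (U C' q \<noteq> U E q \<or> U C q \<noteq> U C' q)}"
    have "p \<in> S" using p unfolding S_def dn_def by auto
    moreover have "finite E" using Suc.prems(1,2) finite_subset by blast
    then have "finite S" by (rule finite_subset[rotated]) (auto simp: S_def)
    ultimately obtain q where q: "q \<in> S" "\<forall>s\<in>S. \<not> lt1 s q"
      using finite_min[of S lt1] tr1 irr1 by blast
    have qE: "q \<in> E" "q \<in> dn p" using q(1) S_def by auto
    have a: "lt2 (U C q) (U C' q)" if neq: "U C q \<noteq> U C' q"
    proof -
      obtain w where w: "w \<in> C'" "lt1 x w" "w \<in> dn q" "lt2 (U C w) (U C' w)"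
        using step[OF fC' x1(3), of q] neq qE EC' C by auto
      have "w \<in> E" using w(1,2) x unfolding C'_def by auto
      then have "w \<in> S" using w qE dn_trans irr2 unfolding S_def by auto
      then have "w = q" using q(2) w(3) unfolding dn_def by auto
      then show ?thesis using w by simp
    qed
    have b: "lt2 (U C' q) (U E q)" if neq: "U C' q \<noteq> U E q"
    proof -
      obtain w where w: "w \<in> E" "w \<in> dn q" "lt2 (U C' w) (U E w)"
        using IH qE neq by blast
      then have "w \<in> S" using w qE dn_trans irr2 unfolding S_def by auto
      then have "w = q" using q(2) w(2) unfolding dn_def by auto
      then show ?thesis using w by simp
    qed
    have "lt2 (U C q) (U E q)"
    proof (cases "U C q = U C' q")
      case True
      then have "U C' q \<noteq> U E q" using q(1) unfolding S_def by auto
      then show ?thesis using b True by simp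
    next
      case False
      show ?thesis
      proof (cases "U C' q = U E q")
        case True then show ?thesis using a False by simp
      next
        case F2: False then show ?thesis using a b False tr2 by blast
      qed
    qed
    then show "\<exists>q\<in>E. q \<in> dn p \<and> lt2 (U C q) (U E q)" using qE by blast
  qed
qed

definition gb :: "(('k \<Rightarrow> 'a) \<Rightarrow> ('k \<Rightarrow> 'a)) \<Rightarrow> ('k \<Rightarrow> 'a) \<Rightarrow> ('k \<Rightarrow> 'a) set \<Rightarrow> bool" where
  "gb g y E \<longleftrightarrow> finite E \<and> y \<in> E \<and> E \<subseteq> dn y \<and> (\<forall>p\<in>E. p \<noteq> y \<longrightarrow> U E p = g p)"

definition mgb where
  "mgb g y E \<longleftrightarrow> gb g y E \<and> (\<forall>E'. gb g y E' \<longrightarrow> \<not> lt2 (U E' y) (U E y))"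

definition H where "H g y = U (SOME E. mgb g y E) y"

definition f where "f = wfrec {(a,b). lt1 a b} H"

lemma ex_mgb: "\<exists>E. mgb g y E"
proof -
  have "gb g y {y}" unfolding gb_def dn_def by auto
  then have "U {y} y \<in> {U E y | E. gb g y E}" by blast
  then obtain v where v: "v \<in> {U E y | E. gb g y E}" "\<And>w. (w, v) \<in> {(a,b). lt2 a b} \<Longrightarrow> w \<notin> {U E y | E. gb g y E}"
    by (rule wfE_min[OF wf2]) blast
  then obtain E where "gb g y E" "v = U E y" by blast
  then show ?thesis using v(2) unfolding mgb_def by blast
qed

lemma gb_cong: "(\<And>p. lt1 p y \<Longrightarrow> g p = g' p) \<Longrightarrow> gb g y E = gb g' y E"
  unfolding gb_def dn_def by auto

lemma H_cong: "(\<And>p. lt1 p y \<Longrightarrow> g p = g' p) \<Longrightarrow> H g y = H g' y"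
proof -
  assume "\<And>p. lt1 p y \<Longrightarrow> g p = g' p"
  then have "\<And>E. gb g y E = gb g' y E" using gb_cong by blast
  then have "mgb g y = mgb g' y" unfolding mgb_def by (intro ext) simp
  then show ?thesis unfolding H_def by simp
qed

lemma f_eq: "f y = H f y"
proof -
  have "f y = H (cut f {(a,b). lt1 a b} y) y"
    unfolding f_def by (rule wfrec[OF wf1])
  also have "\<dots> = H f y" by (rule H_cong) (simp add: cut_def)
  finally show ?thesis .
qed

definition Es where "Es y = (SOME E. mgb f y E)"

lemma Es: "mgb f y (Es y)" "f y = U (Es y) y"
  using someI_ex[OF ex_mgb[of f y]] f_eq[of y] unfolding Es_def H_def by auto

lemma key:
  assumes "gb f y G" "Es y \<subseteq> G"
  shows "U G y = f y"
proof (rule ccontr)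
  assume ne: "U G y \<noteq> f y"
  have E: "gb f y (Es y)" using Es(1) mgb_def by blast
  have fG: "finite G" using assms(1) gb_def by simp
  have yE: "y \<in> Es y" using E gb_def by simp
  obtain q where q: "q \<in> Es y" "q \<in> dn y" "lt2 (U G q) (U (Es y) q)"
  proof -
    have "U G y \<noteq> U (Es y) y" using ne Es(2) by simp
    then show ?thesis using dom[OF fG assms(2)] yE that by blast
  qed
  show False
  proof (cases "q = y")
    case True
    then show False using q Es(1) assms(1) unfolding mgb_def by blast
  next
    case False
    then have "U G q = f q" "U (Es y) q = f q" using assms q E unfolding gb_def by auto
    then show False using q irr2 by simp
  qed
qed

definition DA where "DA A = {p. \<exists>a\<in>A. p \<in> dn a}"

lemma Es_fin: "finite (Es y)" and Es_dn: "Es y \<subseteq> dn y" and Es_y: "y \<in> Es y"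
  using Es(1)[of y] unfolding mgb_def gb_def by auto

lemma cof:
  assumes "finite A"
  shows "\<exists>B. finite B \<and> A \<subseteq> B \<and> B \<subseteq> DA A \<and> (\<forall>p\<in>B. U B p = f p)"
proof -
  have wfR: "wf (inv_image (mult {(a,b). lt1 a b}) mset_set)"
    by (intro wf_inv_image wf_mult wf1)
  show ?thesis using assms
  proof (induction A rule: wf_induct_rule[OF wfR])
    case (1 A)
    show ?case
    proof (cases "A = {}")
      case True
      then show ?thesis by (intro exI[of _ "{}"]) auto
    next
      case False
      obtain y where y: "y \<in> A" "\<forall>s\<in>A. \<not> lt1 y s"
        using finite_max[OF "1.prems" False, of lt1] tr1 irr1 by blast
      define A0 where "A0 = A - {y}"
      define L where "L = Es y - {y}"
      define A1 where "A1 = A0 \<union> L"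
      have fA0: "finite A0" using "1.prems" A0_def by simp
      have fL: "finite L" using Es_fin L_def by simp
      have fA1: "finite A1" using fA0 fL A1_def by simp
      have Lb: "lt1 k y" if "k \<in> L" for k
        using that Es_dn unfolding L_def dn_def by auto
      have m1: "mset_set A = mset_set A0 + {#y#}"
      proof -
        have "A = A0 \<union> {y}" using y(1) A0_def by auto
        moreover have "A0 \<inter> {y} = {}" using A0_def by simp
        ultimately show ?thesis using fA0 by (simp add: mset_set_Union)
      qed
      have m2: "mset_set A1 = mset_set A0 + mset_set (L - A0)"
      proof -
        have e: "A1 = A0 \<union> (L - A0)" using A1_def by auto
        have "mset_set (A0 \<union> (L - A0)) = mset_set A0 + mset_set (L - A0)"
          by (rule mset_set_Union) (use fA0 fL in auto)
        then show ?thesis by (subst e)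
      qed
      have "(mset_set A0 + mset_set (L - A0), mset_set A0 + {#y#}) \<in> mult {(a,b). lt1 a b}"
        by (rule one_step_implies_mult) (use fL Lb in auto)
      then have "(A1, A) \<in> inv_image (mult {(a,b). lt1 a b}) mset_set"
        using m1 m2 by simp
      from "1.IH"[OF this fA1] obtain B1 where B1: "finite B1" "A1 \<subseteq> B1" "B1 \<subseteq> DA A1"
        "\<forall>p\<in>B1. U B1 p = f p" by blast
      have DAsub: "DA A1 \<subseteq> DA A"
      proof
        fix p assume "p \<in> DA A1"
        then obtain a where a: "a \<in> A1" "p \<in> dn a" unfolding DA_def by blast
        show "p \<in> DA A"
        proof (cases "a \<in> A0")
          case True then show ?thesis using a unfolding DA_def A0_def by auto
        next
          case False
          then have "lt1 a y" using a(1) Lb A1_def by auto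
          then have "p \<in> dn y" using a(2) dn_trans unfolding dn_def by blast
          then show ?thesis using y(1) unfolding DA_def by blast
        qed
      qed
      have noab: "\<not> lt1 y d" if dB: "d \<in> B1" for d
      proof
        assume yd: "lt1 y d"
        obtain a where a: "a \<in> A1" "d \<in> dn a" using dB B1(3) unfolding DA_def by blast
        then have ya: "lt1 y a" using yd tr1 unfolding dn_def by blast
        show False
        proof (cases "a \<in> A0")
          case True then show False using ya y(2) A0_def by auto
        next
          case False
          then have "lt1 a y" using a(1) Lb A1_def by auto
          then show False using ya tr1 irr1 by blast
        qed
      qed
      have AB1: "A \<subseteq> insert y B1" using B1(2) A0_def A1_def by auto
      show ?thesis
      proof (cases "y \<in> B1")
        case True
        then show ?thesis using B1 AB1 DAsub by (intro exI[of _ B1]) auto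
      next
        case False
        define B where "B = insert y B1"
        have fB: "finite B" using B1(1) B_def by simp
        have c1: "U B p = f p" if "p \<in> B1" for p
        proof -
          have "U B p = U B1 p"
            by (rule loc) (use fB that noab False in \<open>auto simp: B_def\<close>)
          then show ?thesis using B1(4) that by simp
        qed
        define G where "G = B \<inter> dn y"
        have dG: "U B q = U G q" if "q \<in> G" for q
        proof (rule locdn)
          show "finite B" by (rule fB)
          show "G \<subseteq> B" unfolding G_def by blast
          show "\<forall>c\<in>B. \<forall>d\<in>G. lt1 c d \<longrightarrow> c \<in> G" unfolding G_def dn_def using tr1 by blast
          show "q \<in> G" by (rule that)
        qed
        have "gb f y G"
          unfolding gb_def
        proof (intro conjI ballI impI)
          show "finite G" using fB G_def by simp
          show "y \<in> G" unfolding G_def B_def dn_def by simp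
          show "G \<subseteq> dn y" unfolding G_def by simp
          fix q assume "q \<in> G" "q \<noteq> y"
          then show "U G q = f q" using dG[of q] c1[of q] unfolding G_def B_def by auto
        qed
        moreover have "Es y \<subseteq> G"
          using Es_dn B1(2) unfolding G_def B_def A1_def L_def by auto
        ultimately have "U G y = f y" by (rule key)
        moreover have "U B y = U G y" using dG unfolding G_def B_def dn_def by simp
        ultimately have "\<forall>p\<in>B. U B p = f p" using c1 B_def by auto
        moreover have "B \<subseteq> DA A"
        proof -
          have "B1 \<subseteq> DA A" using B1(3) DAsub by blast
          moreover have "y \<in> DA A" using y(1) unfolding DA_def dn_def by blast
          ultimately show ?thesis unfolding B_def by blast
        qed
        ultimately show ?thesis using fB AB1 B_def by blast
      qed
    qed
  qed
qed

lemma uniq: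
  assumes "\<forall>A. finite A \<longrightarrow> (\<exists>B. finite B \<and> A \<subseteq> B \<and> (\<forall>p\<in>B. U B p = g p))"
  shows "g x = f x"
proof (induction x rule: wf_induct_rule[OF wf1])
  case (1 x)
  have "\<exists>B. finite B \<and> Es x \<subseteq> B \<and> (\<forall>p\<in>B. U B p = g p)"
    using assms Es_fin[of x] by blast
  then obtain B where B: "finite B" "Es x \<subseteq> B" "\<forall>p\<in>B. U B p = g p"
    by blast
  define G where "G = B \<inter> dn x"
  have dG: "U B q = U G q" if "q \<in> G" for q
  proof (rule locdn)
    show "finite B" by (rule B(1))
    show "G \<subseteq> B" unfolding G_def by blast
    show "\<forall>c\<in>B. \<forall>d\<in>G. lt1 c d \<longrightarrow> c \<in> G" unfolding G_def dn_def using tr1 by blast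
    show "q \<in> G" by (rule that)
  qed
  have xG: "x \<in> G" using B(2) Es_y unfolding G_def dn_def by auto
  have "gb f x G"
    unfolding gb_def
  proof (intro conjI ballI impI)
    show "finite G" using B(1) G_def by simp
    show "x \<in> G" by (rule xG)
    show "G \<subseteq> dn x" unfolding G_def by simp
    fix q assume q: "q \<in> G" "q \<noteq> x"
    then have "lt1 q x" unfolding G_def dn_def by auto
    then have "g q = f q" using "1.IH"[of q] by simp
    moreover have "U B q = g q" using B(3) q(1) unfolding G_def by simp
    ultimately show "U G q = f q" using dG[OF q(1)] by simp
  qed
  moreover have "Es x \<subseteq> G" using B(2) Es_dn unfolding G_def by auto
  ultimately have "U G x = f x" by (rule key)
  moreover have "U B x = g x" using B(3) xG unfolding G_def by simp
  ultimately show ?case using dG[OF xG] by simp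
qed

end

theorem theorem4p16:
  fixes lt1 lt2 :: "('k::finite \<Rightarrow> 'a::wellorder) \<Rightarrow> ('k \<Rightarrow> 'a) \<Rightarrow> bool"
    and U :: "('k \<Rightarrow> 'a) set \<Rightarrow> ('k \<Rightarrow> 'a) \<Rightarrow> ('k \<Rightarrow> 'a)"
  assumes "strict_order lt1" and "strict_order lt2"
    and "upward lt1" and "upward lt2"
    and "function_assignment U"
    and "hash_decreasing lt1 lt2 U"
  shows "\<exists>!f :: ('k \<Rightarrow> 'a) \<Rightarrow> ('k \<Rightarrow> 'a).
           \<forall>A. finite A \<longrightarrow>
             (\<exists>B. finite B \<and> A \<subseteq> B \<and> graph_on B (U B) \<subseteq> fgraph f)"
proof -
  have t1: "\<And>x y z. lt1 x y \<Longrightarrow> lt1 y z \<Longrightarrow> lt1 x z" "\<And>x. \<not> lt1 x x"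
    using assms(1) unfolding strict_order_def by blast+
  have t2: "\<And>x y z. lt2 x y \<Longrightarrow> lt2 y z \<Longrightarrow> lt2 x z" "\<And>x. \<not> lt2 x x"
    using assms(2) unfolding strict_order_def by blast+
  interpret S: setting lt1 lt2 U
    by (rule setting.intro[OF t1 t2 upward_wf[OF assms(1,3)] upward_wf[OF assms(2,4)] assms(6)])
  show ?thesis
  proof (rule ex1I[of _ S.f])
    show "\<forall>A. finite A \<longrightarrow> (\<exists>B. finite B \<and> A \<subseteq> B \<and> graph_on B (U B) \<subseteq> fgraph S.f)"
    proof (intro allI impI)
      fix A :: "('k \<Rightarrow> 'a) set" assume "finite A"
      then obtain B where B: "finite B" "A \<subseteq> B" "\<forall>p\<in>B. U B p = S.f p"
        using S.cof[OF \<open>finite A\<close>] by blast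
      then have "graph_on B (U B) \<subseteq> fgraph S.f" by (simp add: graph_fgraph)
      then show "\<exists>B. finite B \<and> A \<subseteq> B \<and> graph_on B (U B) \<subseteq> fgraph S.f"
        using B by blast
    qed
  next
    fix g assume g: "\<forall>A. finite A \<longrightarrow> (\<exists>B. finite B \<and> A \<subseteq> B \<and> graph_on B (U B) \<subseteq> fgraph g)"
    show "g = S.f"
    proof (rule ext)
      fix x
      have "\<forall>A. finite A \<longrightarrow> (\<exists>B. finite B \<and> A \<subseteq> B \<and> (\<forall>p\<in>B. U B p = g p))"
        using g by (simp add: graph_fgraph)
      then show "g x = S.f x" by (rule S.uniq)
    qed
  qed
qed

end
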